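(* For all $w,k\in\mathbb{N}$ and $s\in\mathbb{N}_0$ there exists a graph $G$ with $\operatorname{tw}(G)\le k$ such that for every $(\le s)$-subdivision $G'$ of $G$, every graph $H$, and every $H$-partition of $G'$ with layered width at most $w$, the graph $H$ contains $K_{k+1}$ as a minor (and hence $\operatorname{tw}(H)\ge k$). *)

theory Defs
  imports Main
begin

definition graph :: "'a set \<Rightarrow> 'a set set \<Rightarrow> bool" where
  "graph V E \<longleftrightarrow> finite V \<and> (\<forall>e\<in>E. \<exists>u v. e = {u, v} \<and> u \<noteq> v \<and> u \<in> V \<and> v \<in> V)"

definition walk :: "'a set set \<Rightarrow> 'a list \<Rightarrow> bool" where
  "walk E xs \<longleftrightarrow> (\<forall>i. Suc i < length xs \<longrightarrow> {xs ! i, xs ! Suc i} \<in> E)"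

definition connected_in :: "'a set set \<Rightarrow> 'a set \<Rightarrow> bool" where
  "connected_in E S \<longleftrightarrow> S \<noteq> {} \<and>
     (\<forall>u\<in>S. \<forall>v\<in>S. \<exists>xs. xs \<noteq> [] \<and> hd xs = u \<and> last xs = v \<and> set xs \<subseteq> S \<and> walk E xs)"

definition is_cycle :: "'a set set \<Rightarrow> 'a list \<Rightarrow> bool" where
  "is_cycle E xs \<longleftrightarrow> length xs \<ge> 3 \<and> distinct xs \<and> walk E xs \<and> {last xs, hd xs} \<in> E"

definition tree :: "'a set \<Rightarrow> 'a set set \<Rightarrow> bool" where
  "tree T TE \<longleftrightarrow> graph T TE \<and> connected_in TE T \<and> \<not> (\<exists>xs. is_cycle TE xs)"

definition tree_decomposition ::
  "'a set \<Rightarrow> 'a set set \<Rightarrow> 't set \<Rightarrow> 't set set \<Rightarrow> ('t \<Rightarrow> 'a set) \<Rightarrow> bool" where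
  "tree_decomposition V E T TE \<beta> \<longleftrightarrow> tree T TE \<and> (\<forall>t\<in>T. \<beta> t \<subseteq> V) \<and>
     (\<forall>v\<in>V. connected_in TE {t\<in>T. v \<in> \<beta> t}) \<and>
     (\<forall>e\<in>E. \<exists>t\<in>T. e \<subseteq> \<beta> t)"

definition tw_le :: "'a set \<Rightarrow> 'a set set \<Rightarrow> nat \<Rightarrow> bool" where
  "tw_le V E k \<longleftrightarrow> (\<exists>(T::nat set) TE \<beta>. tree_decomposition V E T TE \<beta> \<and>
                        (\<forall>t\<in>T. card (\<beta> t) \<le> k + 1))"

definition has_complete_minor :: "'a set \<Rightarrow> 'a set set \<Rightarrow> nat \<Rightarrow> bool" where
  "has_complete_minor V E n \<longleftrightarrow> (\<exists>B :: nat \<Rightarrow> 'a set.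
     (\<forall>i<n. B i \<subseteq> V \<and> connected_in E (B i)) \<and>
     (\<forall>i<n. \<forall>j<n. i \<noteq> j \<longrightarrow> B i \<inter> B j = {} \<and> (\<exists>u\<in>B i. \<exists>v\<in>B j. {u, v} \<in> E)))"

definition inner_verts :: "'a list \<Rightarrow> 'a list" where
  "inner_verts xs = butlast (tl xs)"

definition path_edges :: "'a list \<Rightarrow> 'a set set" where
  "path_edges xs = {{xs ! i, xs ! Suc i} | i. Suc i < length xs}"

text \<open>(V',E') is a (\<le> s)-subdivision of (V,E): each edge is replaced by a path
  with at most s (new) internal vertices; the original vertices are embedded via phi.\<close>
definition subdivision_le ::
  "nat \<Rightarrow> 'a set \<Rightarrow> 'a set set \<Rightarrow> 'b set \<Rightarrow> 'b set set \<Rightarrow> bool" where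
  "subdivision_le s V E V' E' \<longleftrightarrow> (\<exists>(\<phi> :: 'a \<Rightarrow> 'b) (P :: 'a set \<Rightarrow> 'b list).
     inj_on \<phi> V \<and> \<phi> ` V \<subseteq> V' \<and>
     (\<forall>e\<in>E. \<exists>u v. e = {u, v} \<and> hd (P e) = \<phi> u \<and> last (P e) = \<phi> v) \<and>
     (\<forall>e\<in>E. P e \<noteq> [] \<and> distinct (P e) \<and> length (P e) \<le> s + 2 \<and>
             set (inner_verts (P e)) \<inter> \<phi> ` V = {}) \<and>
     (\<forall>e\<in>E. \<forall>e'\<in>E. e \<noteq> e' \<longrightarrow> set (inner_verts (P e)) \<inter> set (inner_verts (P e')) = {}) \<and>
     V' = \<phi> ` V \<union> (\<Union>e\<in>E. set (P e)) \<and>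
     E' = (\<Union>e\<in>E. path_edges (P e)))"

text \<open>An H-partition of G, given by the map f sending each vertex of G to the
  index (a vertex of H) of its part.\<close>
definition H_partition ::
  "'a set \<Rightarrow> 'a set set \<Rightarrow> 'h set \<Rightarrow> 'h set set \<Rightarrow> ('a \<Rightarrow> 'h) \<Rightarrow> bool" where
  "H_partition V E VH EH f \<longleftrightarrow> f ` V \<subseteq> VH \<and>
     (\<forall>u\<in>V. \<forall>v\<in>V. {u, v} \<in> E \<longrightarrow> f u = f v \<or> {f u, f v} \<in> EH)"

definition layering :: "'a set \<Rightarrow> 'a set set \<Rightarrow> ('a \<Rightarrow> nat) \<Rightarrow> bool" where
  "layering V E L \<longleftrightarrow> (\<forall>u\<in>V. \<forall>v\<in>V. {u, v} \<in> E \<longrightarrow> L u \<le> L v + 1 \<and> L v \<le> L u + 1)"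

definition layered_width_le :: "'a set \<Rightarrow> 'a set set \<Rightarrow> ('a \<Rightarrow> 'h) \<Rightarrow> nat \<Rightarrow> bool" where
  "layered_width_le V E f w \<longleftrightarrow> (\<exists>L. layering V E L \<and>
     (\<forall>x i. card {v\<in>V. f v = x \<and> L v = i} \<le> w))"

end

theory Submission
  imports Defs "HOL-Library.Countable"
begin


definition adj :: "'a set set \<Rightarrow> 'a set \<Rightarrow> 'a \<Rightarrow> 'a \<Rightarrow> bool" where
  "adj E S x y \<longleftrightarrow> x \<in> S \<and> y \<in> S \<and> {x, y} \<in> E"

lemma adj_sym: "adj E S x y \<Longrightarrow> adj E S y x"
  by (auto simp: adj_def insert_commute)

lemma rtc_sym: "(adj E S)\<^sup>*\<^sup>* x y \<Longrightarrow> (adj E S)\<^sup>*\<^sup>* y x"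
proof (induction rule: rtranclp_induct)
  case base then show ?case by simp
next
  case (step y z)
  then show ?case by (meson adj_sym converse_rtranclp_into_rtranclp)
qed

lemma rtc_mono: "(adj E S)\<^sup>*\<^sup>* x y \<Longrightarrow> S \<subseteq> S' \<Longrightarrow> (adj E S')\<^sup>*\<^sup>* x y"
proof (induction rule: rtranclp_induct)
  case base then show ?case by simp
next
  case (step y z)
  then have "adj E S' y z" by (auto simp: adj_def)
  then show ?case using step by (meson rtranclp.rtrancl_into_rtrancl)
qed

lemma walk_Cons: "walk E (x # y # xs) \<longleftrightarrow> {x,y} \<in> E \<and> walk E (y # xs)"
  unfolding walk_def
proof safe
  assume h: "\<forall>i. Suc i < length (x # y # xs) \<longrightarrow> {(x # y # xs) ! i, (x # y # xs) ! Suc i} \<in> E"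
  show "{x,y} \<in> E" using h[rule_format, of 0] by simp
  fix i assume "Suc i < length (y # xs)"
  then show "{(y # xs) ! i, (y # xs) ! Suc i} \<in> E" using h[rule_format, of "Suc i"] by simp
next
  fix i assume a: "{x,y} \<in> E" "\<forall>i. Suc i < length (y # xs) \<longrightarrow> {(y # xs) ! i, (y # xs) ! Suc i} \<in> E"
    "Suc i < length (x#y#xs)"
  then show "{(x # y # xs) ! i, (x # y # xs) ! Suc i} \<in> E" by (cases i) auto
qed

lemma walk_single: "walk E [x]"
  by (simp add: walk_def)

lemma walk_rtc: "walk E xs \<Longrightarrow> xs \<noteq> [] \<Longrightarrow> set xs \<subseteq> S \<Longrightarrow> (adj E S)\<^sup>*\<^sup>* (hd xs) (last xs)"
proof (induction xs rule: induct_list012)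
  case 1 then show ?case by simp
next
  case (2 x) then show ?case by simp
next
  case (3 x y zs)
  then have "(adj E S)\<^sup>*\<^sup>* y (last (y # zs))" by (simp add: walk_Cons)
  moreover have "adj E S x y" using 3 by (simp add: walk_Cons adj_def)
  ultimately show ?case by (simp add: converse_rtranclp_into_rtranclp)
qed

lemma rtc_walk: "(adj E S)\<^sup>*\<^sup>* u v \<Longrightarrow> u \<in> S \<Longrightarrow>
   \<exists>xs. xs \<noteq> [] \<and> hd xs = u \<and> last xs = v \<and> set xs \<subseteq> S \<and> walk E xs"
proof (induction rule: converse_rtranclp_induct)
  case base
  then show ?case by (intro exI[of _ "[v]"]) (simp add: walk_single)
next
  case (step u u')
  then obtain xs where xs: "xs \<noteq> []" "hd xs = u'" "last xs = v" "set xs \<subseteq> S" "walk E xs"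
    by (auto simp: adj_def)
  then obtain ys where ys: "xs = u' # ys" by (cases xs) auto
  show ?case using step xs ys
    by (intro exI[of _ "u # xs"]) (auto simp: walk_Cons adj_def)
qed

lemma connected_in_iff: "connected_in E S \<longleftrightarrow> S \<noteq> {} \<and> (\<forall>u\<in>S. \<forall>v\<in>S. (adj E S)\<^sup>*\<^sup>* u v)"
  unfolding connected_in_def
  by (metis (no_types, lifting) walk_rtc rtc_walk)

lemma connected_center:
  assumes "c \<in> S" "\<forall>x\<in>S. (adj E S)\<^sup>*\<^sup>* x c"
  shows "connected_in E S"
  unfolding connected_in_iff
  using assms by (meson empty_iff rtc_sym rtranclp_trans)

lemma rtc_map:
  assumes "(adj E S)\<^sup>*\<^sup>* a b" "\<forall>x\<in>S. \<forall>y\<in>S. {x,y} \<in> E \<longrightarrow> f x = f y \<or> {f x, f y} \<in> EH"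
  shows "(adj EH (f ` S))\<^sup>*\<^sup>* (f a) (f b)"
  using assms(1)
proof (induction rule: rtranclp_induct)
  case base then show ?case by simp
next
  case (step y z)
  then have "f y = f z \<or> adj EH (f ` S) (f y) (f z)" using assms(2) by (auto simp: adj_def)
  then show ?case using step by (metis rtranclp.rtrancl_into_rtrancl)
qed

lemma walk_seg:
  assumes "walk E p" "l < length p" "\<forall>m. j \<le> m \<and> m \<le> l \<longrightarrow> p ! m \<in> S" "j \<le> l"
  shows "(adj E S)\<^sup>*\<^sup>* (p ! j) (p ! l)"
  using assms
proof (induction l)
  case 0 then show ?case by simp
next
  case (Suc l)
  show ?case
  proof (cases "j = Suc l")
    case True then show ?thesis by simp
  next
    case False
    then have "(adj E S)\<^sup>*\<^sup>* (p ! j) (p ! l)" using Suc by auto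
    moreover have "adj E S (p ! l) (p ! Suc l)"
      using Suc False unfolding adj_def walk_def by auto
    ultimately show ?thesis by (simp add: rtranclp.rtrancl_into_rtrancl)
  qed
qed

lemma cycle_nbrs:
  assumes "is_cycle E xs" "i < length xs"
  shows "\<exists>j1 j2. j1 < length xs \<and> j2 < length xs \<and> j1 \<noteq> j2 \<and> {xs!i, xs!j1} \<in> E \<and> {xs!i, xs!j2} \<in> E"
proof -
  have len: "length xs \<ge> 3" and w: "walk E xs" and le: "{last xs, hd xs} \<in> E"
    using assms(1) by (auto simp: is_cycle_def)
  have hl: "{xs ! 0, xs ! (length xs - 1)} \<in> E"
  proof -
    have ne: "xs \<noteq> []" using len by auto
    have "hd xs = xs ! 0" "last xs = xs ! (length xs - 1)" using ne by (auto simp: hd_conv_nth last_conv_nth)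
    then show ?thesis using le by (simp add: insert_commute)
  qed
  have we: "\<And>j. Suc j < length xs \<Longrightarrow> {xs ! j, xs ! Suc j} \<in> E" using w by (simp add: walk_def)
  show ?thesis
  proof (cases "i = 0")
    case True
    then show ?thesis using hl we[of 0] len by (intro exI[of _ 1] exI[of _ "length xs - 1"]) auto
  next
    case False
    show ?thesis
    proof (cases "i = length xs - 1")
      case True
      have "{xs ! (length xs - 2), xs ! Suc (length xs - 2)} \<in> E" using we[of "length xs - 2"] len by simp
      moreover have "Suc (length xs - 2) = i" using True len by simp
      ultimately show ?thesis using hl True len
        by (intro exI[of _ 0] exI[of _ "length xs - 2"]) (auto simp: insert_commute)
    next
      case False2: False
      have "{xs ! (i - 1), xs ! Suc (i - 1)} \<in> E" using we[of "i - 1"] assms(2) False by simp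
      moreover have "Suc (i - 1) = i" using False by simp
      moreover have "{xs ! i, xs ! Suc i} \<in> E" using we[of i] assms(2) False2 by simp
      ultimately show ?thesis using assms(2) False False2
        by (intro exI[of _ "i - 1"] exI[of _ "Suc i"]) (auto simp: insert_commute)
    qed
  qed
qed

lemma no_cycle_measure:
  fixes h :: "'a \<Rightarrow> nat"
  assumes edge: "\<And>x y. {x,y} \<in> E \<Longrightarrow> (h y < h x \<and> y = par x) \<or> (h x < h y \<and> x = par y)"
  shows "\<not> is_cycle E xs"
proof
  assume cyc: "is_cycle E xs"
  then have ne: "xs \<noteq> []" and d: "distinct xs" by (auto simp: is_cycle_def)
  define m where "m = Max (h ` set xs)"
  have "m \<in> h ` set xs" unfolding m_def using ne by (intro Max_in) auto
  then obtain x where x: "x \<in> set xs" "h x = m" by auto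
  have mx: "\<And>y. y \<in> set xs \<Longrightarrow> h y \<le> h x" using x m_def by simp
  obtain i where i: "i < length xs" "xs ! i = x" using x by (meson in_set_conv_nth)
  obtain j1 j2 where j: "j1 < length xs" "j2 < length xs" "j1 \<noteq> j2" "{x, xs!j1} \<in> E" "{x, xs!j2} \<in> E"
    using cycle_nbrs[OF cyc i(1)] i(2) by auto
  have "xs ! j1 = par x" using edge[OF j(4)] mx[of "xs!j1"] j(1) by auto
  moreover have "xs ! j2 = par x" using edge[OF j(5)] mx[of "xs!j2"] j(2) by auto
  ultimately have "xs ! j1 = xs ! j2" by simp
  then show False using j d by (simp add: nth_eq_iff_index_eq)
qed



locale trs =
  fixes n k :: nat and g :: "nat list \<Rightarrow> nat"
  assumes inj_g: "inj g"
begin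

definition Vl :: "nat list set" where "Vl = {xs. set xs \<subseteq> {..<n} \<and> length xs \<le> k}"
definition VV :: "nat set" where "VV = g ` Vl"
definition EE :: "nat set set" where
  "EE = {{g xs, g (take i xs)} | xs i. xs \<in> Vl \<and> i < length xs}"
definition TE :: "nat set set" where
  "TE = {{g xs, g (butlast xs)} | xs. xs \<in> Vl \<and> xs \<noteq> []}"
definition bag :: "nat \<Rightarrow> nat set" where
  "bag x = g ` ((\<lambda>i. take i (inv g x)) ` {..length (inv g x)})"

lemma ginv[simp]: "inv g (g x) = x" using inj_g by simp
lemma geq[simp]: "g x = g y \<longleftrightarrow> x = y" using inj_g by (auto dest: injD)

lemma take_Vl: "xs \<in> Vl \<Longrightarrow> take i xs \<in> Vl"
  unfolding Vl_def using set_take_subset by fastforce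

lemma butlast_Vl: "xs \<in> Vl \<Longrightarrow> butlast xs \<in> Vl"
  unfolding Vl_def by (auto dest: in_set_butlastD)

lemma fin_Vl: "finite Vl"
  unfolding Vl_def by (rule finite_lists_length_le) simp

lemma fin_VV: "finite VV" unfolding VV_def using fin_Vl by simp

lemma take_neq: "i < length xs \<Longrightarrow> take i xs \<noteq> xs"
proof
  assume "i < length xs" "take i xs = xs"
  then have "length (take i xs) = length xs" by simp
  then show False using \<open>i < length xs\<close> by simp
qed

lemma graph_VE: "graph VV EE"
  unfolding graph_def
proof (intro conjI ballI)
  show "finite VV" by (rule fin_VV)
  fix e assume "e \<in> EE"
  then obtain xs i where e: "e = {g xs, g (take i xs)}" "xs \<in> Vl" "i < length xs"
    unfolding EE_def by blast
  then show "\<exists>u v. e = {u, v} \<and> u \<noteq> v \<and> u \<in> VV \<and> v \<in> VV"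
  proof (intro exI conjI)
    show "e = {g xs, g (take i xs)}" by (rule e(1))
    show "g xs \<noteq> g (take i xs)"
    proof
      assume "g xs = g (take i xs)"
      then have "take i xs = xs" by simp
      then show False using take_neq[OF e(3)] by simp
    qed
    show "g xs \<in> VV" using e(2) unfolding VV_def by simp
    show "g (take i xs) \<in> VV" using take_Vl[OF e(2)] unfolding VV_def by simp
  qed
qed

lemma bag_g: "bag (g xs) = g ` ((\<lambda>i. take i xs) ` {..length xs})"
  by (simp add: bag_def)

lemma chain:
  assumes "xs \<in> Vl" "m \<le> length xs" "\<forall>j. m \<le> j \<and> j \<le> length xs \<longrightarrow> g (take j xs) \<in> S"
  shows "\<forall>j. m \<le> j \<and> j \<le> length xs \<longrightarrow> (adj TE S)\<^sup>*\<^sup>* (g (take j xs)) (g (take m xs))"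
proof (intro allI impI)
  fix j assume "m \<le> j \<and> j \<le> length xs"
  then show "(adj TE S)\<^sup>*\<^sup>* (g (take j xs)) (g (take m xs))"
  proof (induction j)
    case 0 then show ?case by simp
  next
    case (Suc j)
    show ?case
    proof (cases "m = Suc j")
      case True then show ?thesis by simp
    next
      case False
      then have ih: "(adj TE S)\<^sup>*\<^sup>* (g (take j xs)) (g (take m xs))" using Suc by auto
      have bt: "butlast (take (Suc j) xs) = take j xs" using Suc.prems by (simp add: butlast_take)
      have ne: "take (Suc j) xs \<noteq> []" using Suc.prems by (cases xs) auto
      have "{g (take (Suc j) xs), g (butlast (take (Suc j) xs))} \<in> TE"
        unfolding TE_def using take_Vl[OF assms(1)] ne by blast
      then have "{g (take (Suc j) xs), g (take j xs)} \<in> TE" by (simp only: bt)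
      then have "adj TE S (g (take (Suc j) xs)) (g (take j xs))"
        using assms(3) Suc.prems False unfolding adj_def by auto
      then show ?thesis using ih by (simp add: converse_rtranclp_into_rtranclp)
    qed
  qed
qed

lemma graph_TE: "graph VV TE"
  unfolding graph_def
proof (intro conjI ballI)
  show "finite VV" by (rule fin_VV)
  fix e assume "e \<in> TE"
  then obtain xs where e: "e = {g xs, g (butlast xs)}" "xs \<in> Vl" "xs \<noteq> []"
    unfolding TE_def by blast
  have "butlast xs \<noteq> xs"
  proof
    assume "butlast xs = xs"
    then have "length (butlast xs) = length xs" by simp
    then have "length xs - 1 = length xs" by simp
    moreover have "length xs > 0" using e(3) by simp
    ultimately show False by linarith
  qed
  show "\<exists>u v. e = {u, v} \<and> u \<noteq> v \<and> u \<in> VV \<and> v \<in> VV"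
  proof (intro exI conjI)
    show "e = {g xs, g (butlast xs)}" by (rule e(1))
    show "g xs \<noteq> g (butlast xs)" using \<open>butlast xs \<noteq> xs\<close> by simp
    show "g xs \<in> VV" using e(2) unfolding VV_def by simp
    show "g (butlast xs) \<in> VV" using butlast_Vl[OF e(2)] unfolding VV_def by simp
  qed
qed

lemma TE_edge:
  assumes "{x,y} \<in> TE"
  shows "(length (inv g y) < length (inv g x) \<and> y = g (butlast (inv g x))) \<or>
         (length (inv g x) < length (inv g y) \<and> x = g (butlast (inv g y)))"
proof -
  obtain xs where e: "{x,y} = {g xs, g (butlast xs)}" "xs \<noteq> []"
    using assms unfolding TE_def by blast
  then have "(x = g xs \<and> y = g (butlast xs)) \<or> (y = g xs \<and> x = g (butlast xs))"
    by (auto simp: doubleton_eq_iff)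
  then show ?thesis using e(2) by auto
qed

lemma tree_VT: "tree VV TE"
  unfolding tree_def
proof (intro conjI)
  show "graph VV TE" by (rule graph_TE)
  show "\<not> (\<exists>xs. is_cycle TE xs)"
  proof
    assume "\<exists>xs. is_cycle TE xs"
    then obtain xs where "is_cycle TE xs" by blast
    moreover have "\<not> is_cycle TE xs"
      by (rule no_cycle_measure[of TE "\<lambda>x. length (inv g x)" "\<lambda>x. g (butlast (inv g x))"]) (rule TE_edge)
    ultimately show False by simp
  qed
  show "connected_in TE VV"
  proof (rule connected_center[of "g []"])
    show "g [] \<in> VV" unfolding VV_def Vl_def by auto
    show "\<forall>x\<in>VV. (adj TE VV)\<^sup>*\<^sup>* x (g [])"
    proof
      fix x assume "x \<in> VV"
      then obtain xs where xs: "x = g xs" "xs \<in> Vl" unfolding VV_def by auto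
      have "\<forall>j. 0 \<le> j \<and> j \<le> length xs \<longrightarrow> g (take j xs) \<in> VV"
        using take_Vl[OF xs(2)] unfolding VV_def by auto
      from chain[OF xs(2) _ this] have "(adj TE VV)\<^sup>*\<^sup>* (g (take (length xs) xs)) (g (take 0 xs))" by blast
      then show "(adj TE VV)\<^sup>*\<^sup>* x (g [])" using xs by simp
    qed
  qed
qed

lemma tw: "tw_le VV EE k"
  unfolding tw_le_def
proof (intro exI conjI)
  show "tree_decomposition VV EE VV TE bag"
    unfolding tree_decomposition_def
  proof (intro conjI ballI)
    show "tree VV TE" by (rule tree_VT)
    fix t assume "t \<in> VV"
    then obtain xs where xs: "t = g xs" "xs \<in> Vl" unfolding VV_def by auto
    show "bag t \<subseteq> VV" using xs take_Vl unfolding xs(1) bag_g VV_def by auto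
  next
    fix e assume "e \<in> EE"
    then obtain xs i where e: "e = {g xs, g (take i xs)}" "xs \<in> Vl" "i < length xs"
      unfolding EE_def by blast
    have "g xs \<in> bag (g xs)" unfolding bag_g by (metis atMost_iff image_eqI order_refl take_all)
    moreover have "g (take i xs) \<in> bag (g xs)" unfolding bag_g using e(3) by auto
    ultimately show "\<exists>t\<in>VV. e \<subseteq> bag t" using e unfolding VV_def by blast
  next
    fix v assume "v \<in> VV"
    then obtain ys where ys: "v = g ys" "ys \<in> Vl" unfolding VV_def by auto
    let ?D = "{t \<in> VV. v \<in> bag t}"
    show "connected_in TE ?D"
    proof (rule connected_center[of v])
      have "(\<lambda>i. take i ys) (length ys) \<in> (\<lambda>i. take i ys) ` {..length ys}" by (rule imageI) simp
      then have "ys \<in> (\<lambda>i. take i ys) ` {..length ys}" by simp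
      then have "g ys \<in> bag (g ys)" unfolding bag_g by (rule imageI)
      then show "v \<in> ?D" using \<open>v \<in> VV\<close> ys by simp
      show "\<forall>x\<in>?D. (adj TE ?D)\<^sup>*\<^sup>* x v"
      proof
        fix x assume x: "x \<in> ?D"
        then obtain xs where xs: "x = g xs" "xs \<in> Vl" unfolding VV_def by auto
        have "g ys \<in> bag (g xs)" using x xs ys by simp
        then obtain m where m: "m \<le> length xs" "ys = take m xs" unfolding bag_g by auto
        have "\<forall>j. m \<le> j \<and> j \<le> length xs \<longrightarrow> g (take j xs) \<in> ?D"
        proof (intro allI impI)
          fix j assume j: "m \<le> j \<and> j \<le> length xs"
          have "g (take j xs) \<in> VV" using take_Vl[OF xs(2)] unfolding VV_def by auto
          moreover have "v \<in> bag (g (take j xs))"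
          proof -
            have "(\<lambda>i. take i (take j xs)) m \<in> (\<lambda>i. take i (take j xs)) ` {..length (take j xs)}"
              by (rule imageI) (use j in simp)
            then have "ys \<in> (\<lambda>i. take i (take j xs)) ` {..length (take j xs)}" using m j by (simp add: min_def)
            then show ?thesis unfolding bag_g ys(1) by (rule imageI)
          qed
          ultimately show "g (take j xs) \<in> ?D" by simp
        qed
        from chain[OF xs(2) m(1) this] have "(adj TE ?D)\<^sup>*\<^sup>* (g (take (length xs) xs)) (g (take m xs))" using m by blast
        then show "(adj TE ?D)\<^sup>*\<^sup>* x v" using xs m ys by simp
      qed
    qed
  qed
next
    show "\<forall>t\<in>VV. card (bag t) \<le> k + 1"
    proof
      fix t assume "t \<in> VV"
      then obtain xs where xs: "t = g xs" "xs \<in> Vl" unfolding VV_def by auto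
      have "card (bag t) \<le> card {..length xs}" unfolding xs bag_g
        by (metis card_image_le finite_atMost finite_imageI order_trans)
      also have "\<dots> \<le> k + 1" using xs(2) unfolding Vl_def by simp
      finally show "card (bag t) \<le> k + 1" .
    qed
qed

end


locale sub = trs +
  fixes s w :: nat and V' :: "nat set" and E' :: "nat set set" and \<phi> :: "nat \<Rightarrow> nat"
    and P :: "nat set \<Rightarrow> nat list" and VH :: "nat set" and EH :: "nat set set"
    and f :: "nat \<Rightarrow> nat" and L :: "nat \<Rightarrow> nat"
  assumes phi_inj: "inj_on \<phi> VV" and phi_V: "\<phi> ` VV \<subseteq> V'"
  and P_ends: "\<forall>e\<in>EE. \<exists>u v. e = {u, v} \<and> hd (P e) = \<phi> u \<and> last (P e) = \<phi> v"
  and P_props: "\<forall>e\<in>EE. P e \<noteq> [] \<and> distinct (P e) \<and> length (P e) \<le> s + 2 \<and>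
             set (inner_verts (P e)) \<inter> \<phi> ` VV = {}"
  and P_disj: "\<forall>e\<in>EE. \<forall>e'\<in>EE. e \<noteq> e' \<longrightarrow> set (inner_verts (P e)) \<inter> set (inner_verts (P e')) = {}"
  and V'_eq: "V' = \<phi> ` VV \<union> (\<Union>e\<in>EE. set (P e))"
  and E'_eq: "E' = (\<Union>e\<in>EE. path_edges (P e))"
  and Hp: "H_partition V' E' VH EH f"
  and lay: "layering V' E' L"
  and wid: "\<forall>x i. card {v\<in>V'. f v = x \<and> L v = i} \<le> w"
  and nbig: "k * (1 + k * (s + 2)) * ((4 * s + 5) * w) < n"
begin

lemma EE_elem: "e \<in> EE \<Longrightarrow> \<exists>xs i. e = {g xs, g (take i xs)} \<and> xs \<in> Vl \<and> i < length xs"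
  unfolding EE_def by blast

lemma EE_sub: "e \<in> EE \<Longrightarrow> e \<subseteq> VV"
proof -
  assume "e \<in> EE"
  then obtain xs i where e: "e = {g xs, g (take i xs)}" "xs \<in> Vl" "i < length xs"
    using EE_elem by blast
  have "g xs \<in> VV" "g (take i xs) \<in> VV" using e(2) take_Vl[OF e(2)] unfolding VV_def by simp_all
  then show ?thesis using e(1) by simp
qed

lemma edge_in: "cs \<in> Vl \<Longrightarrow> i < length cs \<Longrightarrow> {g (take i cs), g cs} \<in> EE"
proof -
  assume a: "cs \<in> Vl" "i < length cs"
  then have "{g cs, g (take i cs)} \<in> EE" unfolding EE_def by blast
  then show ?thesis by (metis insert_commute)
qed

lemma walkP: "e \<in> EE \<Longrightarrow> walk E' (P e)"
  unfolding walk_def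
proof (intro allI impI)
  fix i assume "e \<in> EE" "Suc i < length (P e)"
  then have "{P e ! i, P e ! Suc i} \<in> path_edges (P e)" unfolding path_edges_def by blast
  then show "{P e ! i, P e ! Suc i} \<in> E'" using \<open>e \<in> EE\<close> unfolding E'_eq by blast
qed

lemma setP: "e \<in> EE \<Longrightarrow> set (P e) \<subseteq> V'"
  unfolding V'_eq by blast

lemma endpt: "e \<in> EE \<Longrightarrow> x \<in> e \<Longrightarrow> \<phi> x \<in> set (P e)"
proof -
  assume a: "e \<in> EE" "x \<in> e"
  then obtain u v where uv: "e = {u, v}" "hd (P e) = \<phi> u" "last (P e) = \<phi> v" using P_ends by blast
  have ne: "P e \<noteq> []" using a P_props by blast
  have "x = u \<or> x = v" using a(2) uv(1) by simp
  then show ?thesis using uv ne by (metis hd_in_set last_in_set)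
qed

lemma fin_EE: "finite EE"
proof -
  have "EE \<subseteq> Pow VV" using EE_sub by blast
  then show ?thesis using fin_VV by (meson finite_Pow_iff finite_subset)
qed

lemma fin_V': "finite V'"
  unfolding V'_eq using fin_VV fin_EE by simp

lemma lay_walk:
  assumes "walk E' p" "set p \<subseteq> V'" "j < length p" "i \<le> j"
  shows "L (p!j) \<le> L (p!i) + (j - i) \<and> L (p!i) \<le> L (p!j) + (j - i)"
  using assms
proof (induction j)
  case 0 then show ?case by simp
next
  case (Suc j)
  show ?case
  proof (cases "i = Suc j")
    case True then show ?thesis by simp
  next
    case False
    then have ih: "L (p!j) \<le> L (p!i) + (j - i) \<and> L (p!i) \<le> L (p!j) + (j - i)" using Suc by auto
    have e: "{p!j, p!Suc j} \<in> E'" using Suc.prems unfolding walk_def by simp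
    have "p!j \<in> V'" "p!Suc j \<in> V'" using Suc.prems by (auto dest: nth_mem)
    then have "L (p!Suc j) \<le> L (p!j) + 1 \<and> L (p!j) \<le> L (p!Suc j) + 1"
      using lay e unfolding layering_def by blast
    then show ?thesis using ih False Suc.prems by linarith
  qed
qed

lemma lay_P: "e \<in> EE \<Longrightarrow> a \<in> set (P e) \<Longrightarrow> b \<in> set (P e) \<Longrightarrow> L a \<le> L b + (s + 1)"
proof -
  assume e: "e \<in> EE" and ab: "a \<in> set (P e)" "b \<in> set (P e)"
  let ?p = "P e"
  obtain i where i: "i < length ?p" "?p ! i = a" using ab(1) by (meson in_set_conv_nth)
  obtain j where j: "j < length ?p" "?p ! j = b" using ab(2) by (meson in_set_conv_nth)
  have len: "length ?p \<le> s + 2" using e P_props by blast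
  have w: "walk E' ?p" using walkP e .
  have sv: "set ?p \<subseteq> V'" using setP e .
  show ?thesis
  proof (cases "i \<le> j")
    case True
    then have "L (?p!i) \<le> L (?p!j) + (s + 1)" using lay_walk[OF w sv j(1) True] i j len by linarith
    then show ?thesis using i j by simp
  next
    case False
    then have "L (?p!i) \<le> L (?p!j) + (s + 1)" using lay_walk[OF w sv i(1), of j] i j len by linarith
    then show ?thesis using i j by simp
  qed
qed

definition r where "r = \<phi> (g [])"

lemma lay_V: "u \<in> VV \<Longrightarrow> L (\<phi> u) \<le> L r + (s + 1) \<and> L r \<le> L (\<phi> u) + (s + 1)"
proof -
  assume "u \<in> VV"
  then obtain xs where xs: "u = g xs" "xs \<in> Vl" unfolding VV_def by blast
  show ?thesis
  proof (cases "xs = []")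
    case True then show ?thesis using xs r_def by simp
  next
    case False
    then have "0 < length xs" by simp
    then have "{g (take 0 xs), g xs} \<in> EE" using edge_in[OF xs(2)] by blast
    then have e: "{g [], g xs} \<in> EE" by simp
    have a1: "\<phi> (g xs) \<in> set (P {g [], g xs})" by (rule endpt[OF e]) simp
    have a2: "\<phi> (g []) \<in> set (P {g [], g xs})" by (rule endpt[OF e]) simp
    have "L (\<phi> (g xs)) \<le> L (\<phi> (g [])) + (s + 1)" by (rule lay_P[OF e a1 a2])
    moreover have "L (\<phi> (g [])) \<le> L (\<phi> (g xs)) + (s + 1)" by (rule lay_P[OF e a2 a1])
    ultimately show ?thesis unfolding r_def xs(1) by simp
  qed
qed

lemma lay_all: "y \<in> V' \<Longrightarrow> L y \<le> L r + (2 * s + 2) \<and> L r \<le> L y + (2 * s + 2)"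
proof -
  assume "y \<in> V'"
  then consider "y \<in> \<phi> ` VV" | e where "e \<in> EE" "y \<in> set (P e)" unfolding V'_eq by blast
  then show ?thesis
  proof cases
    case 1
    then obtain u where "u \<in> VV" "y = \<phi> u" by blast
    then show ?thesis using lay_V[of u] by simp
  next
    case 2
    obtain u v where uv: "e = {u, v}" using P_ends 2(1) by blast
    then have "u \<in> e" by simp
    then have u: "u \<in> VV" using EE_sub[OF 2(1)] by blast
    have pu: "\<phi> u \<in> set (P e)" using endpt[OF 2(1) \<open>u \<in> e\<close>] .
    have "L y \<le> L (\<phi> u) + (s + 1)" by (rule lay_P[OF 2(1) 2(2) pu])
    moreover have "L (\<phi> u) \<le> L y + (s + 1)" by (rule lay_P[OF 2(1) pu 2(2)])
    ultimately show ?thesis using lay_V[OF u] by linarith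
  qed
qed

lemma part_bound: "card {y \<in> V'. f y = X} \<le> (4 * s + 5) * w"
proof -
  define W where "W = {L r - (2 * s + 2) .. L r + (2 * s + 2)}"
  have sub: "{y \<in> V'. f y = X} \<subseteq> (\<Union>i\<in>W. {v \<in> V'. f v = X \<and> L v = i})"
  proof
    fix y assume "y \<in> {y \<in> V'. f y = X}"
    then have y: "y \<in> V'" "f y = X" by auto
    then have "L y \<in> W" using lay_all[OF y(1)] unfolding W_def by auto
    then show "y \<in> (\<Union>i\<in>W. {v \<in> V'. f v = X \<and> L v = i})" using y by blast
  qed
  have fW: "finite W" unfolding W_def by simp
  have "card {y \<in> V'. f y = X} \<le> card (\<Union>i\<in>W. {v \<in> V'. f v = X \<and> L v = i})"
    by (rule card_mono) (use fW fin_V' sub in auto)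
  also have "\<dots> \<le> (\<Sum>i\<in>W. card {v \<in> V'. f v = X \<and> L v = i})" by (rule card_UN_le[OF fW])
  also have "\<dots> \<le> card W * w" using sum_bounded_above[of W "\<lambda>i. card {v \<in> V'. f v = X \<and> L v = i}" w] wid by simp
  also have "\<dots> \<le> (4 * s + 5) * w"
  proof -
    have "card W \<le> 4 * s + 5" unfolding W_def by simp
    then show ?thesis by (rule mult_right_mono) simp
  qed
  finally show ?thesis .
qed

lemma bad_bound: "finite Bad \<Longrightarrow> card {y \<in> V'. f y \<in> Bad} \<le> card Bad * ((4 * s + 5) * w)"
proof -
  assume fB: "finite Bad"
  have "{y \<in> V'. f y \<in> Bad} = (\<Union>X\<in>Bad. {y \<in> V'. f y = X})" by blast
  then have "card {y \<in> V'. f y \<in> Bad} \<le> (\<Sum>X\<in>Bad. card {y \<in> V'. f y = X})"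
    using card_UN_le[OF fB] by simp
  also have "\<dots> \<le> card Bad * ((4 * s + 5) * w)"
    using sum_bounded_above[of Bad "\<lambda>X. card {y \<in> V'. f y = X}" "(4 * s + 5) * w"] part_bound by simp
  finally show ?thesis .
qed

end


context sub
begin

definition A :: "nat list \<Rightarrow> nat set" where
  "A cs = insert (\<phi> (g cs)) (\<Union>i\<in>{..<length cs}. set (P {g (take i cs), g cs}) - {\<phi> (g (take i cs))})"

lemma gVV: "cs \<in> Vl \<Longrightarrow> g cs \<in> VV" unfolding VV_def by simp

lemma A_sub: "cs \<in> Vl \<Longrightarrow> A cs \<subseteq> V'"
proof -
  assume cs: "cs \<in> Vl"
  have "\<phi> (g cs) \<in> V'" using phi_V gVV[OF cs] by blast
  moreover have "\<And>i. i < length cs \<Longrightarrow> set (P {g (take i cs), g cs}) \<subseteq> V'"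
    using setP edge_in[OF cs] by blast
  ultimately show ?thesis unfolding A_def by blast
qed

lemma A_card: "cs \<in> Vl \<Longrightarrow> card (A cs) \<le> 1 + k * (s + 2)"
proof -
  assume cs: "cs \<in> Vl"
  define U where "U = (\<Union>i\<in>{..<length cs}. set (P {g (take i cs), g cs}) - {\<phi> (g (take i cs))})"
  have fU: "finite U" unfolding U_def by simp
  have "card U \<le> (\<Sum>i\<in>{..<length cs}. card (set (P {g (take i cs), g cs}) - {\<phi> (g (take i cs))}))"
    unfolding U_def by (rule card_UN_le) simp
  also have "\<dots> \<le> card {..<length cs} * (s + 2)"
  proof -
    have bd: "\<And>i. i \<in> {..<length cs} \<Longrightarrow> card (set (P {g (take i cs), g cs}) - {\<phi> (g (take i cs))}) \<le> s + 2"
    proof -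
      fix i assume "i \<in> {..<length cs}"
      then have e: "{g (take i cs), g cs} \<in> EE" using edge_in[OF cs] by simp
      have "card (set (P {g (take i cs), g cs}) - {\<phi> (g (take i cs))}) \<le> card (set (P {g (take i cs), g cs}))"
        by (rule card_mono) auto
      also have "\<dots> \<le> length (P {g (take i cs), g cs})" by (rule card_length)
      also have "\<dots> \<le> s + 2" using P_props e by blast
      finally show "card (set (P {g (take i cs), g cs}) - {\<phi> (g (take i cs))}) \<le> s + 2" .
    qed
    have "(\<Sum>i\<in>{..<length cs}. card (set (P {g (take i cs), g cs}) - {\<phi> (g (take i cs))})) \<le> of_nat (card {..<length cs}) * (s + 2)"
      by (rule sum_bounded_above, rule bd, assumption)
    then show ?thesis by simp
  qed
  also have "\<dots> \<le> k * (s + 2)"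
  proof -
    have "length cs \<le> k" using cs unfolding Vl_def by simp
    then have "length cs * (s + 2) \<le> k * (s + 2)" by (rule mult_right_mono) simp
    then show ?thesis by simp
  qed
  finally have cU: "card U \<le> k * (s + 2)" .
  have "card (A cs) \<le> Suc (card U)" unfolding A_def U_def[symmetric]
    using fU by (simp add: card_insert_if)
  then show ?thesis using cU by simp
qed

lemma ends_cases:
  assumes "e \<in> EE" "e = {u, v}"
  shows "(hd (P e) = \<phi> u \<and> last (P e) = \<phi> v) \<or> (hd (P e) = \<phi> v \<and> last (P e) = \<phi> u)"
proof -
  obtain a b where ab: "e = {a, b}" "hd (P e) = \<phi> a" "last (P e) = \<phi> b" using P_ends assms(1) by blast
  have "{u, v} = {a, b}" using ab(1) assms(2) by simp
  then have "(u = a \<and> v = b) \<or> (u = b \<and> v = a)" by (simp only: doubleton_eq_iff)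
  then show ?thesis using ab by blast
qed

lemma path_facts:
  assumes cs: "cs \<in> Vl" and i: "i < length cs"
  defines "p \<equiv> P {g (take i cs), g cs}"
  shows "p \<noteq> [] \<and> distinct p \<and> length p \<ge> 2 \<and> walk E' p \<and>
    ((hd p = \<phi> (g (take i cs)) \<and> last p = \<phi> (g cs)) \<or> (hd p = \<phi> (g cs) \<and> last p = \<phi> (g (take i cs))))"
proof -
  have e: "{g (take i cs), g cs} \<in> EE" using edge_in[OF cs i] .
  have ne: "p \<noteq> []" and d: "distinct p" using P_props e unfolding p_def by blast+
  have hl: "(hd p = \<phi> (g (take i cs)) \<and> last p = \<phi> (g cs)) \<or> (hd p = \<phi> (g cs) \<and> last p = \<phi> (g (take i cs)))"
    using ends_cases[OF e refl] unfolding p_def .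
  have "take i cs \<noteq> cs" using take_neq[OF i] .
  then have "\<phi> (g (take i cs)) \<noteq> \<phi> (g cs)"
    using phi_inj gVV[OF cs] gVV[OF take_Vl[OF cs]] by (metis geq inj_on_eq_iff)
  then have "hd p \<noteq> last p" using hl by metis
  then have "length p \<ge> 2" using ne
    by (metis One_nat_def Suc_1 Suc_le_eq hd_conv_nth last_conv_nth le_less_linear
         length_0_conv less_Suc0 nat_less_le diff_Suc_1)
  then show ?thesis using ne d hl walkP[OF e] unfolding p_def by blast
qed


lemma piece_conn:
  assumes cs: "cs \<in> Vl" and i: "i < length cs"
    and S: "set (P {g (take i cs), g cs}) - {\<phi> (g (take i cs))} \<subseteq> S"
    and y: "y \<in> set (P {g (take i cs), g cs}) - {\<phi> (g (take i cs))}"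
  shows "(adj E' S)\<^sup>*\<^sup>* y (\<phi> (g cs))"
proof -
  define p where "p = P {g (take i cs), g cs}"
  define u where "u = \<phi> (g (take i cs))"
  have pf: "p \<noteq> [] \<and> distinct p \<and> length p \<ge> 2 \<and> walk E' p \<and>
    ((hd p = u \<and> last p = \<phi> (g cs)) \<or> (hd p = \<phi> (g cs) \<and> last p = u))"
    using path_facts[OF cs i] unfolding p_def u_def .
  then have ne: "p \<noteq> []" and d: "distinct p" and len: "length p \<ge> 2" and w: "walk E' p" by auto
  have h0: "hd p = p ! 0" using ne by (simp add: hd_conv_nth)
  have hl: "last p = p ! (length p - 1)" using ne by (simp add: last_conv_nth)
  have yy: "y \<in> set p" "y \<noteq> u" using y unfolding p_def u_def by auto
  obtain j where j: "j < length p" "p ! j = y" using yy(1) by (meson in_set_conv_nth)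
  have S': "set p - {u} \<subseteq> S" using S unfolding p_def u_def .
  have dist: "\<And>a b. a < length p \<Longrightarrow> b < length p \<Longrightarrow> a \<noteq> b \<Longrightarrow> p ! a \<noteq> p ! b"
    using d by (simp add: nth_eq_iff_index_eq)
  from pf consider "hd p = u" "last p = \<phi> (g cs)" | "hd p = \<phi> (g cs)" "last p = u" by blast
  then show ?thesis
  proof cases
    case 1
    have j0: "j \<noteq> 0"
    proof
      assume "j = 0" then have "y = u" using j 1(1) h0 by simp
      then show False using yy(2) by simp
    qed
    have "\<forall>m. j \<le> m \<and> m \<le> length p - 1 \<longrightarrow> p ! m \<in> S"
    proof (intro allI impI)
      fix m assume m: "j \<le> m \<and> m \<le> length p - 1"
      then have "m < length p" "m \<noteq> 0" using j0 len by auto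
      then have "p ! m \<noteq> p ! 0" by (intro dist) (use len in auto)
      then have "p ! m \<in> set p - {u}" using \<open>m < length p\<close> 1(1) h0 by auto
      then show "p ! m \<in> S" using S' by blast
    qed
    then have "(adj E' S)\<^sup>*\<^sup>* (p ! j) (p ! (length p - 1))"
      using walk_seg[OF w, of "length p - 1" j S] j len by auto
    then show ?thesis using j 1(2) hl by simp
  next
    case 2
    have jl: "j \<noteq> length p - 1"
    proof
      assume "j = length p - 1" then have "y = u" using j 2(2) hl by simp
      then show False using yy(2) by simp
    qed
    have "\<forall>m. 0 \<le> m \<and> m \<le> j \<longrightarrow> p ! m \<in> S"
    proof (intro allI impI)
      fix m assume m: "0 \<le> m \<and> m \<le> j"
      then have "m < length p - 1" using jl j by auto
      then have "p ! m \<noteq> p ! (length p - 1)" by (intro dist) (use len in auto)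
      then have "p ! m \<in> set p - {u}" using \<open>m < length p - 1\<close> 2(2) hl by auto
      then show "p ! m \<in> S" using S' by blast
    qed
    then have "(adj E' S)\<^sup>*\<^sup>* (p ! 0) (p ! j)"
      using walk_seg[OF w j(1), of 0 S] by auto
    then have "(adj E' S)\<^sup>*\<^sup>* (p ! j) (p ! 0)" by (rule rtc_sym)
    then show ?thesis using j 2(1) h0 by simp
  qed
qed

lemma A_conn: "cs \<in> Vl \<Longrightarrow> y \<in> A cs \<Longrightarrow> (adj E' (A cs))\<^sup>*\<^sup>* y (\<phi> (g cs))"
proof -
  assume cs: "cs \<in> Vl" and y: "y \<in> A cs"
  show ?thesis
  proof (cases "y = \<phi> (g cs)")
    case True then show ?thesis by simp
  next
    case False
    then obtain i where i: "i < length cs" and yi: "y \<in> set (P {g (take i cs), g cs}) - {\<phi> (g (take i cs))}"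
      using y unfolding A_def by blast
    have "set (P {g (take i cs), g cs}) - {\<phi> (g (take i cs))} \<subseteq> A cs"
      unfolding A_def using i by blast
    then show ?thesis using piece_conn[OF cs i _ yi] by blast
  qed
qed

lemma phi_A: "\<phi> (g cs) \<in> A cs" unfolding A_def by simp

lemma A_adj: "cs \<in> Vl \<Longrightarrow> i < length cs \<Longrightarrow> \<exists>y\<in>A cs. {\<phi> (g (take i cs)), y} \<in> E'"
proof -
  assume cs: "cs \<in> Vl" and i: "i < length cs"
  define p where "p = P {g (take i cs), g cs}"
  define u where "u = \<phi> (g (take i cs))"
  have pf: "p \<noteq> [] \<and> distinct p \<and> length p \<ge> 2 \<and> walk E' p \<and>
    ((hd p = u \<and> last p = \<phi> (g cs)) \<or> (hd p = \<phi> (g cs) \<and> last p = u))"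
    using path_facts[OF cs i] unfolding p_def u_def .
  then have ne: "p \<noteq> []" and d: "distinct p" and len: "length p \<ge> 2" and w: "walk E' p" by auto
  have h0: "hd p = p ! 0" using ne by (simp add: hd_conv_nth)
  have hl: "last p = p ! (length p - 1)" using ne by (simp add: last_conv_nth)
  have dist: "\<And>a b. a < length p \<Longrightarrow> b < length p \<Longrightarrow> a \<noteq> b \<Longrightarrow> p ! a \<noteq> p ! b"
    using d by (simp add: nth_eq_iff_index_eq)
  have sub: "set p - {u} \<subseteq> A cs" unfolding A_def p_def u_def using i by blast
  from pf consider "hd p = u" | "last p = u" by blast
  then show ?thesis
  proof cases
    case 1
    have "p ! 1 \<noteq> p ! 0" by (intro dist) (use len in auto)
    then have "p ! 1 \<in> set p - {u}" using len 1 h0 by auto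
    moreover have "{p ! 0, p ! Suc 0} \<in> E'" using w len unfolding walk_def by auto
    ultimately have "p ! 1 \<in> A cs" "{u, p ! 1} \<in> E'" using sub 1 h0 by auto
    then show ?thesis unfolding u_def by blast
  next
    case 2
    have "p ! (length p - 2) \<noteq> p ! (length p - 1)" by (intro dist) (use len in auto)
    then have "p ! (length p - 2) \<in> set p - {u}" using len 2 hl by auto
    moreover have "{p ! (length p - 2), p ! Suc (length p - 2)} \<in> E'" using w len unfolding walk_def by auto
    moreover have "Suc (length p - 2) = length p - 1" using len by simp
    ultimately have "p ! (length p - 2) \<in> A cs" "{u, p ! (length p - 2)} \<in> E'" using sub 2 hl
      by (auto simp: insert_commute)
    then show ?thesis unfolding u_def by blast
  qed
qed

lemma set_cover: "p \<noteq> [] \<Longrightarrow> set p \<subseteq> {hd p, last p} \<union> set (inner_verts p)"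
proof -
  assume "p \<noteq> []"
  then obtain x q where p: "p = x # q" by (cases p) auto
  show ?thesis
  proof (cases "q = []")
    case True then show ?thesis using p by simp
  next
    case False
    then have "set q = set (butlast q) \<union> {last q}"
      by (metis append_butlast_last_id set_append empty_set list.simps(15) Un_empty_right)
    then show ?thesis using p False unfolding inner_verts_def by auto
  qed
qed

lemma A_cases: "cs \<in> Vl \<Longrightarrow> y \<in> A cs \<Longrightarrow>
   y = \<phi> (g cs) \<or> (\<exists>i<length cs. y \<in> set (inner_verts (P {g (take i cs), g cs})))"
proof -
  assume cs: "cs \<in> Vl" and y: "y \<in> A cs"
  show ?thesis
  proof (cases "y = \<phi> (g cs)")
    case True then show ?thesis by simp
  next
    case False
    then obtain i where i: "i < length cs" and yi: "y \<in> set (P {g (take i cs), g cs}) - {\<phi> (g (take i cs))}"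
      using y unfolding A_def by blast
    define p where "p = P {g (take i cs), g cs}"
    have pf: "p \<noteq> [] \<and> ((hd p = \<phi> (g (take i cs)) \<and> last p = \<phi> (g cs)) \<or> (hd p = \<phi> (g cs) \<and> last p = \<phi> (g (take i cs))))"
      using path_facts[OF cs i] unfolding p_def by blast
    have "y \<in> {hd p, last p} \<union> set (inner_verts p)" using set_cover pf yi unfolding p_def by blast
    then have "y \<in> set (inner_verts p)" using pf yi False by auto
    then show ?thesis using i unfolding p_def by blast
  qed
qed

lemma A_disj:
  assumes c: "cs @ [c] \<in> Vl" and c': "cs @ [c'] \<in> Vl" and y: "y \<in> A (cs @ [c])" "y \<in> A (cs @ [c'])"
  shows "c = c'"
proof (rule ccontr)
  assume cc: "c \<noteq> c'"
  define ys where "ys = cs @ [c]"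
  define ys' where "ys' = cs @ [c']"
  have ne: "ys \<noteq> ys'" using cc unfolding ys_def ys'_def by simp
  have ln: "length ys' = length ys" unfolding ys_def ys'_def by simp
  have yV: "ys \<in> Vl" "ys' \<in> Vl" unfolding ys_def ys'_def by (rule c, rule c')
  have phi_inner: "\<And>e z. e \<in> EE \<Longrightarrow> z \<in> Vl \<Longrightarrow> \<phi> (g z) \<notin> set (inner_verts (P e))"
  proof
    fix e z assume "e \<in> EE" "z \<in> Vl" "\<phi> (g z) \<in> set (inner_verts (P e))"
    moreover have "\<phi> (g z) \<in> \<phi> ` VV" using gVV[OF \<open>z \<in> Vl\<close>] by (rule imageI)
    moreover have "set (inner_verts (P e)) \<inter> \<phi> ` VV = {}" using P_props \<open>e \<in> EE\<close> by blast
    ultimately show False by blast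
  qed
  have c1: "y = \<phi> (g ys) \<or> (\<exists>i<length ys. y \<in> set (inner_verts (P {g (take i ys), g ys})))"
    by (rule A_cases[OF yV(1)]) (use y(1) in \<open>simp add: ys_def\<close>)
  have c2: "y = \<phi> (g ys') \<or> (\<exists>i<length ys'. y \<in> set (inner_verts (P {g (take i ys'), g ys'})))"
    by (rule A_cases[OF yV(2)]) (use y(2) in \<open>simp add: ys'_def\<close>)
  show False
  proof (cases "y = \<phi> (g ys)")
    case True
    show False
    proof (cases "y = \<phi> (g ys')")
      case True2: True
      then have "\<phi> (g ys) = \<phi> (g ys')" using True by simp
      then have "g ys = g ys'" using phi_inj gVV[OF yV(1)] gVV[OF yV(2)] by (meson inj_on_eq_iff)
      then show False using ne by simp
    next
      case False
      then obtain i where "i < length ys'" and "y \<in> set (inner_verts (P {g (take i ys'), g ys'}))" using c2 by blast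
      then show False using phi_inner[OF edge_in[OF yV(2) \<open>i < length ys'\<close>] yV(1)] True by simp
    qed
  next
    case False
    then obtain i where i: "i < length ys" "y \<in> set (inner_verts (P {g (take i ys), g ys}))" using c1 by blast
    show False
    proof (cases "y = \<phi> (g ys')")
      case True
      then show False using phi_inner[OF edge_in[OF yV(1) i(1)] yV(2)] i by simp
    next
      case False2: False
      then obtain i' where i': "i' < length ys'" "y \<in> set (inner_verts (P {g (take i' ys'), g ys'}))" using c2 by blast
      have e1: "{g (take i ys), g ys} \<in> EE" using edge_in[OF yV(1) i(1)] .
      have e2: "{g (take i' ys'), g ys'} \<in> EE" using edge_in[OF yV(2) i'(1)] .
      show False
      proof (cases "{g (take i ys), g ys} = {g (take i' ys'), g ys'}")
        case True
        have "g ys \<in> {g (take i ys), g ys}" by simp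
        then have "g ys \<in> {g (take i' ys'), g ys'}" by (simp only: True)
        then have "ys = take i' ys' \<or> ys = ys'" by simp
        then show False
        proof
          assume "ys = take i' ys'"
          then have "length ys = i'" using i'(1) by simp
          then show False using i'(1) ln by simp
        next
          assume "ys = ys'" then show False using ne by simp
        qed
      next
        case False
        then have "set (inner_verts (P {g (take i ys), g ys})) \<inter> set (inner_verts (P {g (take i' ys'), g ys'})) = {}"
          using P_disj e1 e2 False by simp
        then show False using i(2) i'(2) by blast
      qed
    qed
  qed
qed

end


context sub
begin

lemma snoc_Vl: "cs \<in> Vl \<Longrightarrow> length cs < k \<Longrightarrow> c < n \<Longrightarrow> cs @ [c] \<in> Vl"
  unfolding Vl_def by auto

lemma choose:
  assumes cs: "cs \<in> Vl" "length cs < k" and fB: "finite Bad" and cB: "card Bad \<le> k * (1 + k * (s + 2))"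
  shows "\<exists>c<n. f ` A (cs @ [c]) \<inter> Bad = {}"
proof (rule ccontr)
  assume "\<not> (\<exists>c<n. f ` A (cs @ [c]) \<inter> Bad = {})"
  then have "\<forall>c<n. \<exists>y. y \<in> A (cs @ [c]) \<and> f y \<in> Bad" by blast
  then obtain y where y: "\<And>c. c < n \<Longrightarrow> y c \<in> A (cs @ [c]) \<and> f (y c) \<in> Bad" by metis
  have inj: "inj_on y {..<n}"
  proof (rule inj_onI)
    fix a b assume "a \<in> {..<n}" "b \<in> {..<n}" "y a = y b"
    then show "a = b" using A_disj[OF snoc_Vl[OF cs] snoc_Vl[OF cs], of a b "y a"] y[of a] y[of b] by simp
  qed
  have sub: "y ` {..<n} \<subseteq> {z \<in> V'. f z \<in> Bad}"
  proof
    fix z assume "z \<in> y ` {..<n}"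
    then obtain c where c: "c < n" "z = y c" by auto
    then have "z \<in> A (cs @ [c])" "f z \<in> Bad" using y by auto
    then show "z \<in> {z \<in> V'. f z \<in> Bad}" using A_sub[OF snoc_Vl[OF cs c(1)]] by auto
  qed
  have "n = card (y ` {..<n})" using card_image[OF inj] by simp
  also have "\<dots> \<le> card {z \<in> V'. f z \<in> Bad}" by (rule card_mono) (use fin_V' sub in auto)
  also have "\<dots> \<le> card Bad * ((4 * s + 5) * w)" by (rule bad_bound[OF fB])
  also have "\<dots> \<le> k * (1 + k * (s + 2)) * ((4 * s + 5) * w)" using cB by (rule mult_right_mono) simp
  finally show False using nbig by simp
qed

lemma chain_exists:
  "j \<le> k \<Longrightarrow> \<exists>cs. length cs = j \<and> cs \<in> Vl \<and>
     (\<forall>i1\<le>j. \<forall>i2\<le>j. i1 \<noteq> i2 \<longrightarrow> f ` A (take i1 cs) \<inter> f ` A (take i2 cs) = {})"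
proof (induction j)
  case 0
  have "[] \<in> Vl" unfolding Vl_def by simp
  then show ?case by (intro exI[of _ "[]"]) auto
next
  case (Suc j)
  then obtain cs where cs: "length cs = j" "cs \<in> Vl"
    and d: "\<forall>i1\<le>j. \<forall>i2\<le>j. i1 \<noteq> i2 \<longrightarrow> f ` A (take i1 cs) \<inter> f ` A (take i2 cs) = {}" by auto
  define Bad where "Bad = (\<Union>i\<in>{..j}. f ` A (take i cs))"
  have fA: "\<And>i. finite (A (take i cs))"
    using A_sub take_Vl[OF cs(2)] fin_V' by (meson finite_subset)
  have fB: "finite Bad" unfolding Bad_def using fA by simp
  have "card Bad \<le> (\<Sum>i\<in>{..j}. card (f ` A (take i cs)))" unfolding Bad_def by (rule card_UN_le) simp
  also have "\<dots> \<le> of_nat (card {..j}) * (1 + k * (s + 2))"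
  proof (rule sum_bounded_above)
    fix i assume "i \<in> {..j}"
    have "card (f ` A (take i cs)) \<le> card (A (take i cs))" by (rule card_image_le[OF fA])
    also have "\<dots> \<le> 1 + k * (s + 2)" by (rule A_card[OF take_Vl[OF cs(2)]])
    finally show "card (f ` A (take i cs)) \<le> 1 + k * (s + 2)" .
  qed
  also have "\<dots> \<le> k * (1 + k * (s + 2))"
  proof -
    have "card {..j} \<le> k" using Suc.prems by simp
    then have "card {..j} * (1 + k * (s + 2)) \<le> k * (1 + k * (s + 2))" by (rule mult_right_mono) simp
    then show ?thesis by simp
  qed
  finally have cB: "card Bad \<le> k * (1 + k * (s + 2))" .
  have jk: "length cs < k" using cs Suc.prems by simp
  obtain c where c: "c < n" "f ` A (cs @ [c]) \<inter> Bad = {}" using choose[OF cs(2) jk fB cB] by blast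
  define cs' where "cs' = cs @ [c]"
  have tk: "\<And>i. i \<le> Suc j \<Longrightarrow> take i cs' = (if i \<le> j then take i cs else cs')"
    unfolding cs'_def using cs(1) by auto
  have dd: "\<forall>i1\<le>Suc j. \<forall>i2\<le>Suc j. i1 \<noteq> i2 \<longrightarrow> f ` A (take i1 cs') \<inter> f ` A (take i2 cs') = {}"
  proof (intro allI impI)
    fix i1 i2 assume i: "i1 \<le> Suc j" "i2 \<le> Suc j" "i1 \<noteq> i2"
    consider "i1 \<le> j" "i2 \<le> j" | "i1 = Suc j" "i2 \<le> j" | "i2 = Suc j" "i1 \<le> j" using i by linarith
    then show "f ` A (take i1 cs') \<inter> f ` A (take i2 cs') = {}"
    proof cases
      case 1 then show ?thesis using d i tk by simp
    next
      case 2
      have "f ` A (take i2 cs) \<subseteq> Bad" unfolding Bad_def using 2 by blast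
      then show ?thesis using c(2) tk 2 unfolding cs'_def by auto
    next
      case 3
      have "f ` A (take i1 cs) \<subseteq> Bad" unfolding Bad_def using 3 by blast
      then show ?thesis using c(2) tk 3 unfolding cs'_def by auto
    qed
  qed
  have "cs' \<in> Vl" unfolding cs'_def by (rule snoc_Vl[OF cs(2) jk c(1)])
  moreover have "length cs' = Suc j" unfolding cs'_def using cs(1) by simp
  ultimately show ?case using dd by blast
qed

lemma minor: "has_complete_minor VH EH (k + 1)"
proof -
  obtain cs where cs: "length cs = k" "cs \<in> Vl"
    and d: "\<forall>i1\<le>k. \<forall>i2\<le>k. i1 \<noteq> i2 \<longrightarrow> f ` A (take i1 cs) \<inter> f ` A (take i2 cs) = {}"
    using chain_exists[of k] by auto
  have fV: "f ` V' \<subseteq> VH" and fE: "\<forall>u\<in>V'. \<forall>v\<in>V'. {u, v} \<in> E' \<longrightarrow> f u = f v \<or> {f u, f v} \<in> EH"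
    using Hp unfolding H_partition_def by auto
  define B where "B i = f ` A (take i cs)" for i
  have tV: "\<And>i. take i cs \<in> Vl" using take_Vl[OF cs(2)] .
  show ?thesis unfolding has_complete_minor_def
  proof (intro exI[of _ B] conjI allI impI)
    fix i assume i: "i < k + 1"
    show "B i \<subseteq> VH" unfolding B_def using A_sub[OF tV] fV by blast
    show "connected_in EH (B i)" unfolding connected_in_iff
    proof (intro conjI ballI)
      show "B i \<noteq> {}" unfolding B_def using phi_A by blast
      fix a b assume "a \<in> B i" "b \<in> B i"
      then obtain y1 y2 where y: "y1 \<in> A (take i cs)" "y2 \<in> A (take i cs)" "a = f y1" "b = f y2"
        unfolding B_def by blast
      have "(adj E' (A (take i cs)))\<^sup>*\<^sup>* y1 (\<phi> (g (take i cs)))" by (rule A_conn[OF tV y(1)])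
      moreover have "(adj E' (A (take i cs)))\<^sup>*\<^sup>* (\<phi> (g (take i cs))) y2" by (rule rtc_sym[OF A_conn[OF tV y(2)]])
      ultimately have "(adj E' (A (take i cs)))\<^sup>*\<^sup>* y1 y2" by (rule rtranclp_trans)
      moreover have "\<forall>x\<in>A (take i cs). \<forall>y\<in>A (take i cs). {x, y} \<in> E' \<longrightarrow> f x = f y \<or> {f x, f y} \<in> EH"
      proof (intro ballI)
        fix x y assume "x \<in> A (take i cs)" "y \<in> A (take i cs)"
        then have "x \<in> V'" "y \<in> V'" using A_sub[OF tV] by blast+
        then show "{x, y} \<in> E' \<longrightarrow> f x = f y \<or> {f x, f y} \<in> EH" using fE by blast
      qed
      ultimately have "(adj EH (f ` A (take i cs)))\<^sup>*\<^sup>* (f y1) (f y2)" by (rule rtc_map)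
      then show "(adj EH (B i))\<^sup>*\<^sup>* a b" unfolding B_def using y by simp
    qed
  next
    fix i j assume i: "i < k + 1" and j: "j < k + 1" and ij: "i \<noteq> j"
    have "i \<le> k" "j \<le> k" using i j by simp_all
    then show "B i \<inter> B j = {}" unfolding B_def using d[rule_format, of i j] ij by simp
    have adj_lt: "\<And>a b. a < b \<Longrightarrow> b \<le> k \<Longrightarrow> \<exists>u\<in>B a. \<exists>v\<in>B b. {u, v} \<in> EH"
    proof -
      fix a b assume ab: "a < b" "b \<le> k"
      have la: "a < length (take b cs)" using ab cs(1) by simp
      obtain y where y: "y \<in> A (take b cs)" "{\<phi> (g (take a (take b cs))), y} \<in> E'"
        using A_adj[OF tV la] by (elim bexE)
      have ta: "take a (take b cs) = take a cs" using ab by (simp add: min_def)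
      let ?x = "\<phi> (g (take a cs))"
      have xA: "?x \<in> A (take a cs)" by (rule phi_A)
      have xV: "?x \<in> V'" using A_sub[OF tV] xA by blast
      have yV: "y \<in> V'" using A_sub[OF tV] y(1) by blast
      have ne: "f ?x \<noteq> f y"
      proof
        assume "f ?x = f y"
        have "f ?x \<in> f ` A (take a cs)" by (rule imageI[OF xA])
        moreover have "f ?x \<in> f ` A (take b cs)" unfolding \<open>f ?x = f y\<close> by (rule imageI[OF y(1)])
        ultimately have "f ?x \<in> f ` A (take a cs) \<inter> f ` A (take b cs)" by (rule IntI)
        moreover have "a \<le> k" "a \<noteq> b" using ab by simp_all
        moreover have "f ` A (take a cs) \<inter> f ` A (take b cs) = {}"
          using d[rule_format, of a b] ab \<open>a \<le> k\<close> \<open>a \<noteq> b\<close> by simp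
        ultimately show False by simp
      qed
      have "{?x, y} \<in> E'" using y(2) ta by simp
      then have "f ?x = f y \<or> {f ?x, f y} \<in> EH" using fE[rule_format, OF xV yV] by simp
      then have eh: "{f ?x, f y} \<in> EH" using ne by simp
      have "f ?x \<in> B a" unfolding B_def by (rule imageI[OF xA])
      moreover have "f y \<in> B b" unfolding B_def by (rule imageI[OF y(1)])
      ultimately show "\<exists>u\<in>B a. \<exists>v\<in>B b. {u, v} \<in> EH" using eh by blast
    qed
    show "\<exists>u\<in>B i. \<exists>v\<in>B j. {u, v} \<in> EH"
    proof (cases "i < j")
      case True
      have "j \<le> k" using j by simp
      then show ?thesis using adj_lt[OF True] by blast
    next
      case False
      then have "j < i" using ij by simp
      have "i \<le> k" using i by simp
      then obtain u v where "u \<in> B j" "v \<in> B i" "{u, v} \<in> EH" using adj_lt[OF \<open>j < i\<close>] by blast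
      then show ?thesis by (metis insert_commute)
    qed
  qed
qed


end

theorem lemma3p6:
  fixes w k s :: nat
  assumes "w \<ge> 1" and "k \<ge> 1"
  shows "\<exists>(V :: nat set) (E :: nat set set). graph V E \<and> tw_le V E k \<and>
           (\<forall>(V' :: nat set) (E' :: nat set set). subdivision_le s V E V' E' \<longrightarrow>
              (\<forall>(VH :: nat set) (EH :: nat set set) (f :: nat \<Rightarrow> nat).
                 graph VH EH \<and> H_partition V' E' VH EH f \<and> layered_width_le V' E' f w
                 \<longrightarrow> has_complete_minor VH EH (k + 1)))"
proof -
  define n where "n = k * (1 + k * (s + 2)) * ((4 * s + 5) * w) + 1"
  interpret T: trs n k "to_nat :: nat list \<Rightarrow> nat" by unfold_locales simp
  show ?thesis
  proof (intro exI[of _ T.VV] exI[of _ T.EE] conjI allI impI)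
    show "graph T.VV T.EE" by (rule T.graph_VE)
    show "tw_le T.VV T.EE k" by (rule T.tw)
    fix V' :: "nat set" and E' :: "nat set set"
    assume sd: "subdivision_le s T.VV T.EE V' E'"
    fix VH :: "nat set" and EH :: "nat set set" and f :: "nat \<Rightarrow> nat"
    assume h: "graph VH EH \<and> H_partition V' E' VH EH f \<and> layered_width_le V' E' f w"
    from sd obtain \<phi> :: "nat \<Rightarrow> nat" and P :: "nat set \<Rightarrow> nat list" where
      p1: "inj_on \<phi> T.VV" and p2: "\<phi> ` T.VV \<subseteq> V'"
      and p3: "\<forall>e\<in>T.EE. \<exists>u v. e = {u, v} \<and> hd (P e) = \<phi> u \<and> last (P e) = \<phi> v"
      and p4: "\<forall>e\<in>T.EE. P e \<noteq> [] \<and> distinct (P e) \<and> length (P e) \<le> s + 2 \<and>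
             set (inner_verts (P e)) \<inter> \<phi> ` T.VV = {}"
      and p5: "\<forall>e\<in>T.EE. \<forall>e'\<in>T.EE. e \<noteq> e' \<longrightarrow> set (inner_verts (P e)) \<inter> set (inner_verts (P e')) = {}"
      and p6: "V' = \<phi> ` T.VV \<union> (\<Union>e\<in>T.EE. set (P e))"
      and p7: "E' = (\<Union>e\<in>T.EE. path_edges (P e))"
      unfolding subdivision_le_def by (elim exE conjE)
    from h have hp: "H_partition V' E' VH EH f" by simp
    from h obtain L where L1: "layering V' E' L" and L2: "\<forall>x i. card {v\<in>V'. f v = x \<and> L v = i} \<le> w"
      unfolding layered_width_le_def by (elim conjE exE)
    have nb: "k * (1 + k * (s + 2)) * ((4 * s + 5) * w) < n" unfolding n_def by simp
    interpret S: sub n k "to_nat :: nat list \<Rightarrow> nat" s w V' E' \<phi> P VH EH f L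
      by (unfold_locales; fact p1 p2 p3 p4 p5 p6 p7 hp L1 L2 nb)
    show "has_complete_minor VH EH (k + 1)" by (rule S.minor)
  qed
qed

end
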